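(* Let $S\in\mathcal{B}_A(\mathcal{H})$. Then $$\omega_A^4(S)\le\frac14\Big\|\big(S^{\sharp_A}S\big)^2+\big(SS^{\sharp_A}\big)^2\Big\|_A+\frac12\,\omega_A\big(S^{\sharp_A}S^2S^{\sharp_A}\big).$$
   Context: $\mathcal{H}$ is a complex Hilbert space with inner product $\langle\cdot,\cdot\rangle$, and $A$ is a fixed nonzero positive bounded operator on $\mathcal{H}$. Set $\langle x,y\rangle_A=\langle Ax,y\rangle$ and $\|x\|_A=\|A^{1/2}x\|$. $\mathcal{B}_A(\mathcal{H})$ is the set of bounded operators $T$ for which there exists a bounded $S$ with $\langle Tx,y\rangle_A=\langle x,Sy\rangle_A$ for all $x,y$ (equivalently $\mathcal{R}(T^*A)\subseteq\mathcal{R}(A)$). For $T\in\mathcal{B}_A(\mathcal{H})$, $T^{\sharp_A}=A^\dagger T^*A$ ($A^\dagger$ the Moore–Penrose inverse) is the reduced solution of $AX=T^*A$. For an operator $T$ with $\|Tx\|_A\le\lambda\|x\|_A$ for some $\lambda>0$ and all $x$, $\|T\|_A=\sup\{\|Tx\|_A: \|x\|_A=1\}$, and $\omega_A(T)=\sup\{|\langle Tx,x\rangle_A|:\|x\|_A=1\}$. *)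

theory Defs
  imports "HOL-Analysis.Analysis"
begin

class complex_inner = real_normed_vector +
  fixes scaleC :: "complex \<Rightarrow> 'a \<Rightarrow> 'a"
    and cinner :: "'a \<Rightarrow> 'a \<Rightarrow> complex"
  assumes scaleC_add_right: "scaleC a (x + y) = scaleC a x + scaleC a y"
    and scaleC_add_left: "scaleC (a + b) x = scaleC a x + scaleC b x"
    and scaleC_scaleC: "scaleC a (scaleC b x) = scaleC (a * b) x"
    and scaleC_one: "scaleC 1 x = x"
    and scaleR_scaleC: "scaleR r x = scaleC (of_real r) x"
    and cinner_conj: "cinner x y = cnj (cinner y x)"
    and cinner_add_left: "cinner (x + y) z = cinner x z + cinner y z"
    and cinner_scaleC_left: "cinner (scaleC a x) y = a * cinner x y"
    and cinner_self_real: "Im (cinner x x) = 0"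
    and cinner_self_nonneg: "0 \<le> Re (cinner x x)"
    and norm_cinner: "norm x = sqrt (Re (cinner x x))"

class complex_hilbert = complex_inner + complete_space

definition clinear :: "('a::complex_inner \<Rightarrow> 'b::complex_inner) \<Rightarrow> bool" where
  "clinear f \<longleftrightarrow> (\<forall>x y. f (x + y) = f x + f y) \<and> (\<forall>c x. f (scaleC c x) = scaleC c (f x))"

definition bounded_clinear :: "('a::complex_inner \<Rightarrow> 'b::complex_inner) \<Rightarrow> bool" where
  "bounded_clinear f \<longleftrightarrow> clinear f \<and> (\<exists>K. \<forall>x. norm (f x) \<le> norm x * K)"

text \<open>Hilbert adjoint T* (exists and is unique for bounded T on a Hilbert space).\<close>
definition cadjoint :: "('a::complex_inner \<Rightarrow> 'a) \<Rightarrow> ('a \<Rightarrow> 'a)" where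
  "cadjoint T = (SOME S. \<forall>x y. cinner (T x) y = cinner x (S y))"

definition positive_op :: "('a::complex_inner \<Rightarrow> 'a) \<Rightarrow> bool" where
  "positive_op A \<longleftrightarrow> bounded_clinear A \<and>
     (\<forall>x. Im (cinner (A x) x) = 0 \<and> 0 \<le> Re (cinner (A x) x))"

definition innerA :: "('a::complex_inner \<Rightarrow> 'a) \<Rightarrow> 'a \<Rightarrow> 'a \<Rightarrow> complex" where
  "innerA A x y = cinner (A x) y"

text \<open>norm_A x = norm (A^(1/2) x) = sqrt (Ax,x).\<close>
definition normA :: "('a::complex_inner \<Rightarrow> 'a) \<Rightarrow> 'a \<Rightarrow> real" where
  "normA A x = sqrt (Re (cinner (A x) x))"

definition BA :: "('a::complex_inner \<Rightarrow> 'a) \<Rightarrow> ('a \<Rightarrow> 'a) \<Rightarrow> bool" where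
  "BA A T \<longleftrightarrow> bounded_clinear T \<and>
     (\<exists>S. bounded_clinear S \<and> (\<forall>x y. innerA A (T x) y = innerA A x (S y)))"

text \<open>Moore--Penrose inverse of A, on its domain R(A) + R(A)-perp: the unique x in N(A)-perp
with A x - y in R(A)-perp  (i.e. A x = P_{closure R(A)} y).\<close>
definition mp_inv :: "('a::complex_inner \<Rightarrow> 'a) \<Rightarrow> 'a \<Rightarrow> 'a" where
  "mp_inv A y = (THE x. (\<forall>z. A z = 0 \<longrightarrow> cinner x z = 0) \<and> (\<forall>w. cinner (A x - y) (A w) = 0))"

definition sharpA :: "('a::complex_inner \<Rightarrow> 'a) \<Rightarrow> ('a \<Rightarrow> 'a) \<Rightarrow> ('a \<Rightarrow> 'a)" where
  "sharpA A T = mp_inv A \<circ> cadjoint T \<circ> A"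

definition opnormA :: "('a::complex_inner \<Rightarrow> 'a) \<Rightarrow> ('a \<Rightarrow> 'a) \<Rightarrow> real" where
  "opnormA A T = Sup {normA A (T x) | x. normA A x = 1}"

definition omegaA :: "('a::complex_inner \<Rightarrow> 'a) \<Rightarrow> ('a \<Rightarrow> 'a) \<Rightarrow> real" where
  "omegaA A T = Sup {cmod (innerA A (T x) x) | x. normA A x = 1}"

end

theory Submission
  imports Defs
begin

context complex_inner begin
lemma scaleC_zero_right[simp]: "scaleC a 0 = 0"
  using scaleC_add_right[of a 0 0] by simp
lemma scaleC_zero_left[simp]: "scaleC 0 x = 0"
  using scaleC_add_left[of 0 0 x] by simp
lemma scaleC_minus_right: "scaleC a (- x) = - scaleC a x"
proof -
  have "0 = scaleC a x + scaleC a (-x)" using scaleC_add_right[of a x "-x"] by simp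
  then show ?thesis using minus_unique[of "scaleC a x" "scaleC a (-x)"] by simp
qed
lemma scaleC_diff_right: "scaleC a (x - y) = scaleC a x - scaleC a y"
proof -
  have "scaleC a (x - y) = scaleC a (x + - y)" by simp
  also have "\<dots> = scaleC a x + scaleC a (- y)" by (rule scaleC_add_right)
  also have "\<dots> = scaleC a x - scaleC a y" by (simp add: scaleC_minus_right)
  finally show ?thesis .
qed
lemma scaleC_of_real: "scaleC (of_real r) x = scaleR r x"
  by (simp add: scaleR_scaleC)
lemma cinner_add_right: "cinner x (y + z) = cinner x y + cinner x z"
  using cinner_conj[of x "y+z"] cinner_conj[of y x] cinner_conj[of z x] by (simp add: cinner_add_left)
lemma cinner_scaleC_right: "cinner x (scaleC a y) = cnj a * cinner x y"
proof -
  have "cinner x (scaleC a y) = cnj (cinner (scaleC a y) x)" by (rule cinner_conj)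
  also have "\<dots> = cnj a * cnj (cinner y x)" by (simp add: cinner_scaleC_left)
  finally show ?thesis using cinner_conj[of x y] by simp
qed
lemma cinner_zero_left[simp]: "cinner 0 y = 0"
  using cinner_add_left[of 0 0 y] by simp
lemma cinner_zero_right[simp]: "cinner y 0 = 0"
  using cinner_conj[of y 0] by simp
lemma cinner_minus_left: "cinner (- x) y = - cinner x y"
proof -
  have "0 = cinner x y + cinner (-x) y" using cinner_add_left[of x "-x" y] by simp
  then show ?thesis by (simp add: complex_eq_iff)
qed
lemma cinner_diff_left: "cinner (x - y) z = cinner x z - cinner y z"
proof -
  have "cinner (x - y) z = cinner (x + - y) z" by simp
  also have "\<dots> = cinner x z + cinner (- y) z" by (rule cinner_add_left)
  also have "\<dots> = cinner x z - cinner y z" by (simp add: cinner_minus_left)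
  finally show ?thesis .
qed
lemma cinner_minus_right: "cinner x (- y) = - cinner x y"
  using cinner_conj[of x "-y"] cinner_conj[of y x] by (simp add: cinner_minus_left)
lemma cinner_diff_right: "cinner x (y - z) = cinner x y - cinner x z"
proof -
  have "cinner x (y - z) = cinner x (y + - z)" by simp
  also have "\<dots> = cinner x y + cinner x (- z)" by (rule cinner_add_right)
  also have "\<dots> = cinner x y - cinner x z" by (simp add: cinner_minus_right)
  finally show ?thesis .
qed
lemma cinner_self: "cinner x x = complex_of_real ((norm x)^2)"
  by (simp add: complex_eq_iff norm_cinner cinner_self_real cinner_self_nonneg)
lemma cinner_self_eq_0: "cinner x x = 0 \<longleftrightarrow> x = 0"
  by (simp add: cinner_self)
lemma cinner_eqI: "(\<And>x. cinner x u = cinner x v) \<Longrightarrow> u = v"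
proof -
  assume h: "\<And>x. cinner x u = cinner x v"
  have "cinner (u - v) (u - v) = 0" using h[of "u - v"] by (simp add: cinner_diff_right)
  then show ?thesis by (simp add: cinner_self_eq_0)
qed
end

lemma cnj_mult_self: "cnj a * a = complex_of_real ((cmod a)^2)"
  by (metis complex_norm_square mult.commute)

lemma cnj_ofreal_mult_self: "cnj (complex_of_real s * a) * a = complex_of_real (s * (cmod a)^2)"
  by (simp only: complex_cnj_mult complex_cnj_complex_of_real mult.assoc cnj_mult_self of_real_mult)

lemma clinear_zero: "clinear f \<Longrightarrow> f 0 = 0"
  unfolding clinear_def by (metis add_0 add_cancel_right_right)
lemma clinear_minus: "clinear f \<Longrightarrow> f (- x) = - f x"
proof -
  assume f: "clinear f"
  have "0 = f x + f (-x)" using clinear_zero[OF f] f unfolding clinear_def by (metis add.right_inverse)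
  then show ?thesis using minus_unique[of "f x" "f (-x)"] by simp
qed
lemma clinear_diff: "clinear f \<Longrightarrow> f (x - y) = f x - f y"
proof -
  assume f: "clinear f"
  have "f (x - y) = f (x + - y)" by simp
  also have "\<dots> = f x + f (- y)" using f by (simp only: clinear_def)
  also have "\<dots> = f x - f y" by (simp add: clinear_minus[OF f])
  finally show ?thesis .
qed
lemma clinear_add: "clinear f \<Longrightarrow> f (x + y) = f x + f y"
  by (simp add: clinear_def)
lemma clinear_scaleC: "clinear f \<Longrightarrow> f (scaleC c x) = scaleC c (f x)"
  by (simp add: clinear_def)

lemma pos_clinear: "positive_op A \<Longrightarrow> clinear A"
  by (simp add: positive_op_def bounded_clinear_def)

lemma pos_Im: "positive_op A \<Longrightarrow> Im (cinner (A x) x) = 0"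
  by (simp add: positive_op_def)

lemma pos_Re: "positive_op A \<Longrightarrow> 0 \<le> Re (cinner (A x) x)"
  by (simp add: positive_op_def)

lemma pos_selfadj:
  fixes A :: "'a::complex_inner \<Rightarrow> 'a"
  assumes P: "positive_op A"
  shows "cinner (A x) y = cinner x (A y)"
proof -
  have L: "clinear A" using P by (rule pos_clinear)
  define a where "a = cinner (A x) y"
  define b where "b = cinner (A y) x"
  have e1: "cinner (A (x + y)) (x + y) = cinner (A x) x + a + b + cinner (A y) y"
    by (simp add: clinear_add[OF L] cinner_add_left cinner_add_right a_def b_def)
  have "Im (cinner (A (x + y)) (x + y)) = 0" by (rule pos_Im[OF P])
  then have i1: "Im a + Im b = 0" using e1 pos_Im[OF P, of x] pos_Im[OF P, of y] by simp
  have e2: "cinner (A (x + scaleC \<i> y)) (x + scaleC \<i> y)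
      = cinner (A x) x + (- \<i>) * a + \<i> * b + cinner (A y) y"
    by (simp add: clinear_add[OF L] clinear_scaleC[OF L] cinner_add_left cinner_add_right
        cinner_scaleC_left cinner_scaleC_right a_def b_def algebra_simps)
  have "Im (cinner (A (x + scaleC \<i> y)) (x + scaleC \<i> y)) = 0" by (rule pos_Im[OF P])
  then have i2: "Re b - Re a = 0" using e2 pos_Im[OF P, of x] pos_Im[OF P, of y] by simp
  have "a = cnj b" using i1 i2 by (simp add: complex_eq_iff)
  also have "cnj b = cinner x (A y)" unfolding b_def by (rule cinner_conj[symmetric])
  finally show ?thesis unfolding a_def .
qed

lemma iA_conj: "positive_op A \<Longrightarrow> innerA A x y = cnj (innerA A y x)"
  unfolding innerA_def by (metis pos_selfadj cinner_conj)

lemma iA_add_left: "positive_op A \<Longrightarrow> innerA A (x + y) z = innerA A x z + innerA A y z"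
  unfolding innerA_def by (simp add: clinear_add[OF pos_clinear] cinner_add_left)
lemma iA_add_right: "innerA A x (y + z) = innerA A x y + innerA A x z"
  unfolding innerA_def by (simp add: cinner_add_right)
lemma iA_diff_left: "positive_op A \<Longrightarrow> innerA A (x - y) z = innerA A x z - innerA A y z"
  unfolding innerA_def by (simp add: clinear_diff[OF pos_clinear] cinner_diff_left)
lemma iA_diff_right: "innerA A x (y - z) = innerA A x y - innerA A x z"
  unfolding innerA_def by (simp add: cinner_diff_right)
lemma iA_scaleC_left: "positive_op A \<Longrightarrow> innerA A (scaleC c x) z = c * innerA A x z"
  unfolding innerA_def by (simp add: clinear_scaleC[OF pos_clinear] cinner_scaleC_left)
lemma iA_scaleC_right: "innerA A x (scaleC c z) = cnj c * innerA A x z"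
  unfolding innerA_def by (simp add: cinner_scaleC_right)

lemma normA_nonneg: "positive_op A \<Longrightarrow> 0 \<le> normA A x"
  by (simp add: normA_def pos_Re)

lemma normA_sq: assumes P: "positive_op A" shows "(normA A x)^2 = Re (innerA A x x)"
  unfolding normA_def innerA_def using pos_Re[OF P, of x] by simp

lemma iA_self: "positive_op A \<Longrightarrow> innerA A x x = complex_of_real ((normA A x)^2)"
  using normA_sq[of A x] pos_Im[of A x] unfolding innerA_def by (simp add: complex_eq_iff)

lemma iA_expand:
  assumes P: "positive_op A"
  shows "Re (innerA A (x - scaleC t y) (x - scaleC t y))
     = (normA A x)^2 - 2 * Re (cnj t * innerA A x y) + (cmod t)^2 * (normA A y)^2"
proof -
  have c: "innerA A y x = cnj (innerA A x y)" by (rule iA_conj[OF P])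
  have "innerA A (x - scaleC t y) (x - scaleC t y)
     = innerA A x x - cnj t * innerA A x y - t * innerA A y x + t * cnj t * innerA A y y"
    by (simp add: iA_diff_left[OF P] iA_diff_right iA_scaleC_left[OF P] iA_scaleC_right algebra_simps)
  also have "\<dots> = innerA A x x - cnj t * innerA A x y - cnj (cnj t * innerA A x y)
       + complex_of_real ((cmod t)^2) * innerA A y y"
    using complex_norm_square[of t] by (simp add: c)
  finally have e: "innerA A (x - scaleC t y) (x - scaleC t y) = \<dots>" .
  show ?thesis unfolding e using normA_sq[OF P, of x] normA_sq[OF P, of y] iA_self[OF P, of y]
    by simp
qed

lemma iA_CS:
  fixes A :: "'a::complex_inner \<Rightarrow> 'a"
  assumes P: "positive_op A"
  shows "cmod (innerA A x y) \<le> normA A x * normA A y"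
proof -
  define a where "a = innerA A x y"
  define p where "p = (normA A x)^2"
  define q where "q = (normA A y)^2"
  have q0: "0 \<le> q" unfolding q_def by simp
  have key: "0 \<le> p - 2 * s * (cmod a)^2 + s^2 * (cmod a)^2 * q" for s :: real
  proof -
    have "0 \<le> Re (innerA A (x - scaleC (of_real s * a) y) (x - scaleC (of_real s * a) y))"
      using normA_sq[OF P, of "x - scaleC (of_real s * a) y"] by (metis zero_le_power2)
    also have "\<dots> = p - 2 * Re (cnj (of_real s * a) * a) + (cmod (of_real s * a))^2 * q"
      unfolding iA_expand[OF P] p_def q_def a_def ..
    also have "cnj (of_real s * a) * a = of_real (s * (cmod a)^2)"
      by (rule cnj_ofreal_mult_self)
    also have "(cmod (of_real s * a))^2 = s^2 * (cmod a)^2"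
      by (simp add: norm_mult power_mult_distrib)
    finally show ?thesis by (simp add: mult.commute mult.left_commute)
  qed
  have "(cmod a)^2 \<le> p * q"
  proof (cases "q = 0")
    case True
    show ?thesis
    proof (rule ccontr)
      assume "\<not> ?thesis"
      then have pos: "0 < (cmod a)^2" using True by simp
      have p0: "0 \<le> p" unfolding p_def by simp
      have "0 \<le> p - 2 * ((p + 1) / (2 * (cmod a)^2)) * (cmod a)^2"
        using key[of "(p + 1) / (2 * (cmod a)^2)"] True by simp
      also have "2 * ((p + 1) / (2 * (cmod a)^2)) * (cmod a)^2 = p + 1"
        using pos by (simp add: field_simps)
      finally show False by simp
    qed
  next
    case False
    then have qp: "0 < q" using q0 by simp
    have "0 \<le> p - 2 * (1/q) * (cmod a)^2 + (1/q)^2 * (cmod a)^2 * q" by (rule key)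
    also have "\<dots> = (p * q - (cmod a)^2) / q" using qp by (simp add: field_simps power2_eq_square)
    finally show ?thesis using qp by (simp add: divide_nonneg_pos zero_le_divide_iff)
  qed
  also have "p * q = (normA A x * normA A y)^2" unfolding p_def q_def by (simp add: power_mult_distrib)
  finally have "(cmod a)^2 \<le> (normA A x * normA A y)^2" .
  then show ?thesis unfolding a_def
    by (rule power2_le_imp_le) (simp add: normA_nonneg[OF P])
qed

lemma normA_scaleC:
  assumes P: "positive_op A"
  shows "normA A (scaleC c x) = cmod c * normA A x"
proof -
  have "innerA A (scaleC c x) (scaleC c x) = (c * cnj c) * innerA A x x"
    by (simp add: iA_scaleC_left[OF P] iA_scaleC_right mult_ac)
  also have "\<dots> = of_real ((cmod c)^2 * (normA A x)^2)"
    by (simp only: iA_self[OF P] complex_norm_square[symmetric] of_real_mult[symmetric])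
  finally have "(normA A (scaleC c x))^2 = (cmod c)^2 * (normA A x)^2"
    using normA_sq[OF P, of "scaleC c x"] by simp
  then have "(normA A (scaleC c x))^2 = (cmod c * normA A x)^2" by (simp add: power_mult_distrib)
  then show ?thesis using normA_nonneg[OF P]
    by (metis norm_ge_zero power2_eq_iff_nonneg zero_le_mult_iff)
qed

lemma normA_add:
  assumes P: "positive_op A"
  shows "normA A (x + y) \<le> normA A x + normA A y"
proof -
  have "(normA A (x + y))^2 = (normA A x)^2 + (normA A y)^2 + 2 * Re (innerA A x y)"
    using normA_sq[OF P, of "x+y"] normA_sq[OF P, of x] normA_sq[OF P, of y] iA_conj[OF P, of y x]
    by (simp add: iA_add_left[OF P] iA_add_right)
  also have "Re (innerA A x y) \<le> normA A x * normA A y"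
    using iA_CS[OF P, of x y] complex_Re_le_cmod order_trans by blast
  then have "(normA A x)^2 + (normA A y)^2 + 2 * Re (innerA A x y) \<le> (normA A x + normA A y)^2"
    by (simp add: power2_sum)
  finally show ?thesis using normA_nonneg[OF P]
    by (meson add_nonneg_nonneg power2_le_imp_le)
qed

lemma id_positive: "positive_op (id :: 'a::complex_inner \<Rightarrow> 'a)"
  unfolding positive_op_def bounded_clinear_def clinear_def
  using cinner_self_real cinner_self_nonneg by (auto intro: exI[of _ 1])

lemma innerA_id: "innerA id x y = cinner x y"
  by (simp add: innerA_def)

lemma normA_id: "normA id x = norm x"
  by (simp add: normA_def norm_cinner)

lemma cinner_CS: "cmod (cinner x y) \<le> norm x * norm (y::'a::complex_inner)"
  using iA_CS[OF id_positive, of x y] by (simp add: innerA_id normA_id)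

lemma closed_kernel:
  fixes F :: "'a::real_normed_vector \<Rightarrow> 'b::real_normed_vector"
  assumes lin: "\<And>x y. F (x - y) = F x - F y" and bd: "\<And>x. norm (F x) \<le> K * norm x"
  shows "closed {x. F x = 0}"
  unfolding closed_sequential_limits
proof (intro allI impI, elim conjE)
  fix x l assume xs: "\<forall>n. x n \<in> {x. F x = 0}" and lim: "x \<longlonglongrightarrow> l"
  show "l \<in> {x. F x = 0}"
  proof (rule ccontr)
    assume "l \<notin> {x. F x = 0}"
    then have pos: "0 < norm (F l)" by simp
    have e: "norm (F l) \<le> K * norm (x n - l)" for n
    proof -
      have "F l = - F (x n - l)" using lin[of "x n" l] xs by simp
      then have "norm (F l) = norm (F (x n - l))" by simp
      also have "\<dots> \<le> K * norm (x n - l)" by (rule bd)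
      finally show ?thesis .
    qed
    show False
    proof (cases "K \<le> 0")
      case True
      then show False using e[of 0] pos by (smt (verit) mult_nonpos_nonneg norm_ge_zero)
    next
      case False
      then have "0 < norm (F l) / K" using pos by simp
      from LIMSEQ_D[OF lim this] obtain N where "\<forall>n\<ge>N. norm (x n - l) < norm (F l) / K" by blast
      then have "K * norm (x N - l) < norm (F l)" using False by (simp add: pos_less_divide_eq mult.commute)
      then show False using e[of N] by simp
    qed
  qed
qed

lemma parallelogram:
  fixes x y :: "'a::complex_inner"
  shows "(norm (x + y))^2 + (norm (x - y))^2 = 2 * (norm x)^2 + 2 * (norm y)^2"
proof -
  have "complex_of_real ((norm (x + y))^2 + (norm (x - y))^2)
      = cinner (x + y) (x + y) + cinner (x - y) (x - y)" by (simp add: cinner_self)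
  also have "\<dots> = 2 * cinner x x + 2 * cinner y y"
    by (simp add: cinner_add_left cinner_add_right cinner_diff_left cinner_diff_right)
  also have "\<dots> = complex_of_real (2 * (norm x)^2 + 2 * (norm y)^2)" by (simp add: cinner_self)
  finally show ?thesis using of_real_eq_iff by blast
qed

lemma norm_sq_expand:
  fixes w u :: "'a::complex_inner"
  shows "(norm (w - scaleC t u))^2 = (norm w)^2 - 2 * Re (cnj t * cinner w u) + (cmod t)^2 * (norm u)^2"
  using iA_expand[OF id_positive, of w t u] normA_sq[OF id_positive, of "w - scaleC t u"]
  by (simp add: innerA_id normA_id)

lemma orth_from_min:
  fixes w u :: "'a::complex_inner"
  assumes min: "\<And>t. norm w \<le> norm (w - scaleC t u)"
  shows "cinner w u = 0"
proof -
  define c where "c = cinner w u"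
  define q where "q = (norm u)^2"
  define s where "s = 1 / (q + 1)"
  have q0: "0 \<le> q" unfolding q_def by simp
  have s0: "0 < s" unfolding s_def using q0 by simp
  have sq: "s * q < 1" unfolding s_def using q0 by (simp add: field_simps)
  have "(norm w)^2 \<le> (norm (w - scaleC (of_real s * c) u))^2"
    using min[of "of_real s * c"] by (simp add: power_mono)
  also have "\<dots> = (norm w)^2 - 2 * Re (cnj (of_real s * c) * c) + (cmod (of_real s * c))^2 * q"
    unfolding norm_sq_expand c_def q_def ..
  also have "cnj (of_real s * c) * c = of_real (s * (cmod c)^2)"
    by (rule cnj_ofreal_mult_self)
  also have "(cmod (of_real s * c))^2 = s^2 * (cmod c)^2"
    by (simp add: norm_mult power_mult_distrib)
  finally have "0 \<le> s * (cmod c)^2 * (s * q - 2)" by (simp add: algebra_simps power2_eq_square)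
  moreover have "s * q - 2 < 0" using sq by simp
  ultimately have "s * (cmod c)^2 \<le> 0" using zero_le_mult_iff[of "s * (cmod c)^2" "s * q - 2"] by linarith
  then have "(cmod c)^2 \<le> 0" using s0 by (simp add: mult_le_0_iff)
  then show ?thesis unfolding c_def by simp
qed

lemma projection_exists:
  fixes M :: "'a::complex_hilbert set"
  assumes M0: "0 \<in> M" and Madd: "\<And>x y. x \<in> M \<Longrightarrow> y \<in> M \<Longrightarrow> x + y \<in> M"
    and Msc: "\<And>c x. x \<in> M \<Longrightarrow> scaleC c x \<in> M" and Mcl: "closed M"
  shows "\<exists>m\<in>M. \<forall>u\<in>M. cinner (v - m) u = 0"
proof -
  define D where "D = (\<lambda>m. norm (v - m)) ` M"
  define d where "d = Inf D"
  have Dne: "D \<noteq> {}" using M0 unfolding D_def by auto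
  have Dbd: "bdd_below D" unfolding D_def by (rule bdd_belowI[of _ 0]) auto
  have dle: "\<And>x. x \<in> M \<Longrightarrow> d \<le> norm (v - x)"
    unfolding d_def D_def by (rule cInf_lower) (use Dbd D_def in auto)
  have d0: "0 \<le> d" unfolding d_def by (rule cInf_greatest[OF Dne]) (auto simp: D_def)
  have "\<forall>n. \<exists>m\<in>M. norm (v - m) < d + 1 / real (Suc n)"
  proof
    fix n
    have "Inf D < d + 1 / real (Suc n)" unfolding d_def by simp
    then show "\<exists>m\<in>M. norm (v - m) < d + 1 / real (Suc n)"
      using cInf_less_iff[OF Dne Dbd] unfolding D_def by auto
  qed
  then obtain m where mM: "\<And>n. m n \<in> M" and mlt: "\<And>n. norm (v - m n) < d + 1 / real (Suc n)"
    by metis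
  define e where "e n = 1 / real (Suc n)" for n
  have e0: "0 < e n" "e n \<le> 1" for n unfolding e_def by (auto simp: field_simps)
  have cb: "(norm (m n - m k))^2 \<le> (4 * d + 2) * (e n + e k)" for n k
  proof -
    define x where "x = v - m n"
    define y where "y = v - m k"
    define mid where "mid = scaleC (of_real (1/2)) (m n + m k)"
    have midM: "mid \<in> M" unfolding mid_def using Madd[OF mM mM] Msc by blast
    have "x + y = scaleR 2 (v - mid)"
      unfolding x_def y_def mid_def scaleC_of_real by (simp add: algebra_simps scaleR_2)
    then have nxy: "norm (x + y) = 2 * norm (v - mid)" by simp
    have "2 * d \<le> norm (x + y)" unfolding nxy using dle[OF midM] by simp
    then have "(2 * d)^2 \<le> (norm (x + y))^2" by (rule power_mono) (use d0 in simp)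
    moreover have "(norm (x - y))^2 = (norm (m k - m n))^2" unfolding x_def y_def by simp
    moreover have "norm x \<le> d + e n" "norm y \<le> d + e k"
      using mlt[of n] mlt[of k] unfolding x_def y_def e_def by auto
    then have "(norm x)^2 \<le> (d + e n)^2" "(norm y)^2 \<le> (d + e k)^2"
      by (simp_all add: power_mono)
    ultimately have "(norm (m k - m n))^2 \<le> 2 * (d + e n)^2 + 2 * (d + e k)^2 - (2 * d)^2"
      using parallelogram[of x y] by linarith
    also have "\<dots> = 4 * d * e n + 2 * (e n * e n) + 4 * d * e k + 2 * (e k * e k)"
      by (simp add: power2_eq_square algebra_simps)
    also have "\<dots> \<le> 4 * d * e n + 2 * e n + 4 * d * e k + 2 * e k"
      using e0[of n] e0[of k] by (smt (verit) mult_left_le mult_nonneg_nonneg)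
    also have "\<dots> = (4 * d + 2) * (e n + e k)" by (simp add: algebra_simps)
    finally show ?thesis by (simp add: norm_minus_commute)
  qed
  have "Cauchy m"
  proof (rule CauchyI)
    fix eps :: real assume eps: "0 < eps"
    obtain N where N: "(8 * d + 4) / eps^2 < real N" using reals_Archimedean2 by blast
    show "\<exists>N. \<forall>a\<ge>N. \<forall>b\<ge>N. norm (m a - m b) < eps"
    proof (intro exI allI impI)
      fix a b assume a: "N \<le> a" and b: "N \<le> b"
      have ea: "e a \<le> 1 / real (Suc N)" "e b \<le> 1 / real (Suc N)"
        unfolding e_def using a b by (auto simp: frac_le)
      have "(norm (m a - m b))^2 \<le> (4 * d + 2) * (e a + e b)" by (rule cb)
      also have "\<dots> \<le> (4 * d + 2) * (2 / real (Suc N))"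
        using ea d0 by (intro mult_left_mono) auto
      also have "\<dots> = (8 * d + 4) / real (Suc N)" by (simp add: field_simps)
      also have "\<dots> < eps^2"
      proof -
        have "(8 * d + 4) / eps^2 < real (Suc N)" using N by simp
        then show ?thesis using eps by (simp add: divide_less_eq mult.commute)
      qed
      finally have "(norm (m a - m b))^2 < eps^2" .
      then show "norm (m a - m b) < eps" using eps by (simp add: power_less_imp_less_base)
    qed
  qed
  then have "convergent m" by (rule Cauchy_convergent)
  then obtain l where lim: "m \<longlonglongrightarrow> l" unfolding convergent_def by blast
  have lM: "l \<in> M" using closed_sequentially[OF Mcl mM lim] .
  have nl: "norm (v - l) \<le> d"
  proof (rule ccontr)
    assume "\<not> ?thesis"
    then have del: "0 < (norm (v - l) - d) / 2" by simp
    from LIMSEQ_D[OF lim del] obtain N1 where N1: "\<forall>n\<ge>N1. norm (m n - l) < (norm (v - l) - d) / 2" by blast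
    obtain N2 where N2: "2 / (norm (v - l) - d) < real N2" using reals_Archimedean2 by blast
    define n where "n = max N1 N2"
    have h1: "norm (m n - l) < (norm (v - l) - d) / 2" using N1 unfolding n_def by simp
    have "2 / (norm (v - l) - d) < real (Suc n)" using N2 unfolding n_def by simp
    then have h2: "1 / real (Suc n) < (norm (v - l) - d) / 2" using del
      by (simp add: field_simps)
    define en where "en = 1 / real (Suc n)"
    define dl where "dl = norm (v - l)"
    have h2': "en < (dl - d) / 2" using h2 unfolding en_def dl_def .
    have m': "norm (v - m n) < d + en" using mlt[of n] unfolding en_def .
    have h1': "norm (m n - l) < (dl - d) / 2" using h1 unfolding dl_def .
    have tri: "dl \<le> norm (v - m n) + norm (m n - l)"
      using norm_triangle_ineq[of "v - m n" "m n - l"] unfolding dl_def by simp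
    show False using tri h1' h2' m' by argo
  qed
  show ?thesis
  proof (intro bexI[OF _ lM] ballI)
    fix u assume uM: "u \<in> M"
    show "cinner (v - l) u = 0"
    proof (rule orth_from_min)
      fix t
      have "l + scaleC t u \<in> M" using Madd[OF lM Msc[OF uM]] .
      then have "d \<le> norm (v - (l + scaleC t u))" by (rule dle)
      then show "norm (v - l) \<le> norm (v - l - scaleC t u)" using nl by (simp add: diff_diff_eq)
    qed
  qed
qed

lemma riesz:
  fixes S :: "'a::complex_hilbert \<Rightarrow> 'a"
  assumes B: "bounded_clinear S"
  shows "\<exists>w. \<forall>x. cinner (S x) y = cinner x w"
proof -
  have L: "clinear S" using B by (simp add: bounded_clinear_def)
  obtain K where K: "\<And>x. norm (S x) \<le> norm x * K" using B by (auto simp: bounded_clinear_def)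
  define f where "f x = cinner (S x) y" for x
  have f_diff: "f (x - x') = f x - f x'" for x x'
    unfolding f_def by (simp add: clinear_diff[OF L] cinner_diff_left)
  have f_add: "f (x + x') = f x + f x'" for x x'
    unfolding f_def by (simp add: clinear_add[OF L] cinner_add_left)
  have f_sc: "f (scaleC c x) = c * f x" for c x
    unfolding f_def by (simp add: clinear_scaleC[OF L] cinner_scaleC_left)
  have f0: "f 0 = 0" unfolding f_def by (simp add: clinear_zero[OF L])
  have f_bd: "norm (f x) \<le> (K * norm y) * norm x" for x
  proof -
    have "norm (f x) \<le> norm (S x) * norm y" unfolding f_def by (rule cinner_CS)
    also have "\<dots> \<le> norm x * K * norm y" by (rule mult_right_mono[OF K]) simp
    finally show ?thesis by (simp add: mult_ac)
  qed
  have cl: "closed {x. f x = 0}" by (rule closed_kernel[of f, OF f_diff f_bd])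
  show ?thesis
  proof (cases "\<forall>x. f x = 0")
    case True
    then show ?thesis unfolding f_def by (intro exI[of _ 0]) simp
  next
    case False
    then obtain x0 where x0: "f x0 \<noteq> 0" by blast
    obtain m where mM: "m \<in> {x. f x = 0}" and orth: "\<forall>u\<in>{x. f x = 0}. cinner (x0 - m) u = 0"
      using projection_exists[of "{x. f x = 0}" x0] cl f0 f_add f_sc by auto
    define z where "z = x0 - m"
    have fz: "f z \<noteq> 0" unfolding z_def f_diff using mM x0 by simp
    have z0: "z \<noteq> 0" using fz f0 by auto
    have czz: "cinner z z \<noteq> 0" using z0 by (simp add: cinner_self_eq_0)
    have key: "cinner x z = (f x / f z) * cinner z z" for x
    proof -
      define u where "u = x - scaleC (f x / f z) z"
      have "f u = 0" unfolding u_def f_diff f_sc using fz by simp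
      then have "cinner z u = 0" using orth unfolding z_def by simp
      then have "cinner u z = 0" using cinner_conj[of u z] by simp
      then show ?thesis unfolding u_def by (simp add: cinner_diff_left cinner_scaleC_left)
    qed
    show ?thesis
    proof (intro exI allI)
      fix x
      have "cinner x (scaleC (cnj (f z / cinner z z)) z) = (f z / cinner z z) * cinner x z"
        by (simp add: cinner_scaleC_right)
      also have "\<dots> = f x" by (subst key[of x]) (use fz czz in \<open>simp add: field_simps\<close>)
      finally show "cinner (S x) y = cinner x (scaleC (cnj (f z / cinner z z)) z)"
        unfolding f_def by simp
    qed
  qed
qed

lemma cadjoint_eq:
  fixes S :: "'a::complex_hilbert \<Rightarrow> 'a"
  assumes B: "bounded_clinear S"
  shows "cinner (S x) y = cinner x (cadjoint S y)"
proof -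
  have "\<forall>y. \<exists>w. \<forall>x. cinner (S x) y = cinner x w" using riesz[OF B] by blast
  then obtain S' where "\<forall>y x. cinner (S x) y = cinner x (S' y)" by metis
  then have ex: "\<exists>S'. \<forall>x y. cinner (S x) y = cinner x (S' y)" by blast
  show ?thesis unfolding cadjoint_def using someI_ex[OF ex] by blast
qed

lemma bclinear_bound:
  assumes "bounded_clinear F"
  obtains K where "\<And>x. norm (F x) \<le> K * norm x"
  using assms unfolding bounded_clinear_def by (metis mult.commute)

lemma mp_inv_A:
  fixes A :: "'a::complex_hilbert \<Rightarrow> 'a"
  assumes P: "positive_op A"
  shows "A (mp_inv A (A w)) = A w"
proof -
  have L: "clinear A" by (rule pos_clinear[OF P])
  have BA: "bounded_clinear A" using P by (simp add: positive_op_def)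
  obtain K where K: "\<And>x. norm (A x) \<le> K * norm x" using bclinear_bound[OF BA] by blast
  have cl: "closed {x. A x = 0}" by (rule closed_kernel[of A, OF clinear_diff[OF L] K])
  obtain m where mM: "m \<in> {x. A x = 0}" and orth: "\<forall>u\<in>{x. A x = 0}. cinner (w - m) u = 0"
    using projection_exists[of "{x. A x = 0}" w] cl clinear_zero[OF L] clinear_add[OF L]
      clinear_scaleC[OF L] by auto
  define Q where "Q x \<longleftrightarrow> (\<forall>z. A z = 0 \<longrightarrow> cinner x z = 0) \<and> (\<forall>w'. cinner (A x - A w) (A w') = 0)" for x
  have Qx0: "Q (w - m)" unfolding Q_def using orth mM by (simp add: clinear_diff[OF L])
  have uniq: "x1 = x2" if "Q x1" "Q x2" for x1 x2
  proof -
    define d where "d = x1 - x2"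
    have "cinner (A d) (A w') = 0" for w'
    proof -
      have "cinner (A d) (A w') = cinner (A x1 - A w) (A w') - cinner (A x2 - A w) (A w')"
        unfolding d_def by (simp add: clinear_diff[OF L] cinner_diff_left)
      then show ?thesis using that unfolding Q_def by simp
    qed
    then have "A d = 0" using cinner_self_eq_0 by blast
    then have "cinner x1 d = 0" "cinner x2 d = 0" using that unfolding Q_def by auto
    then have "cinner d d = 0" unfolding d_def[of] by (simp add: cinner_diff_left)
    then show ?thesis unfolding d_def by (simp add: cinner_self_eq_0)
  qed
  have ex1: "\<exists>!x. Q x" using Qx0 uniq by blast
  have "Q (mp_inv A (A w))" unfolding mp_inv_def
    using theI'[OF ex1] unfolding Q_def by simp
  then have "cinner (A (mp_inv A (A w)) - A w) (A (mp_inv A (A w) - w)) = 0" unfolding Q_def by blast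
  then have "cinner (A (mp_inv A (A w)) - A w) (A (mp_inv A (A w)) - A w) = 0"
    by (simp add: clinear_diff[OF L])
  then show ?thesis by (simp add: cinner_self_eq_0)
qed

lemma sharp_props:
  fixes A S :: "'a::complex_hilbert \<Rightarrow> 'a"
  assumes P: "positive_op A" and B: "BA A S"
  obtains S' where "bounded_clinear S'" "\<And>x y. innerA A (S x) y = innerA A x (S' y)"
    "\<And>y. A (sharpA A S y) = A (S' y)"
proof -
  obtain S' where BS': "bounded_clinear S'" and adj: "\<And>x y. innerA A (S x) y = innerA A x (S' y)"
    using B unfolding BA_def by blast
  have BS: "bounded_clinear S" using B unfolding BA_def by blast
  have ca: "cadjoint S (A y) = A (S' y)" for y
  proof (rule cinner_eqI)
    fix x
    have "cinner x (cadjoint S (A y)) = cinner (S x) (A y)" by (rule cadjoint_eq[OF BS, symmetric])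
    also have "\<dots> = cinner (A (S x)) y" by (rule pos_selfadj[OF P, symmetric])
    also have "\<dots> = innerA A x (S' y)" using adj[of x y] unfolding innerA_def .
    also have "\<dots> = cinner x (A (S' y))" unfolding innerA_def by (rule pos_selfadj[OF P])
    finally show "cinner x (cadjoint S (A y)) = cinner x (A (S' y))" .
  qed
  have "A (sharpA A S y) = A (S' y)" for y
    unfolding sharpA_def comp_def ca by (rule mp_inv_A[OF P])
  then show ?thesis using that BS' adj by blast
qed

lemma normA_le_norm:
  assumes P: "positive_op A"
  obtains a where "0 \<le> a" "\<And>w. normA A w \<le> a * norm w"
proof -
  obtain K where K: "\<And>x. norm (A x) \<le> K * norm x"
    using bclinear_bound P unfolding positive_op_def by blast
  define k where "k = \<bar>K\<bar>"
  have "normA A w \<le> sqrt k * norm w" for w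
  proof -
    have "(normA A w)^2 = Re (cinner (A w) w)" using normA_sq[OF P] unfolding innerA_def by simp
    also have "\<dots> \<le> cmod (cinner (A w) w)" by (rule complex_Re_le_cmod)
    also have "\<dots> \<le> norm (A w) * norm w" by (rule cinner_CS)
    also have "\<dots> \<le> (k * norm w) * norm w"
    proof -
      have "norm (A w) \<le> k * norm w" using K[of w] unfolding k_def
        by (smt (verit) abs_ge_self mult_right_mono norm_ge_zero)
      then show ?thesis by (rule mult_right_mono) simp
    qed
    also have "\<dots> = (sqrt k * norm w)^2" unfolding k_def by (simp add: power_mult_distrib power2_eq_square)
    finally show ?thesis by (rule power2_le_imp_le) (simp add: k_def)
  qed
  then show ?thesis using that[of "sqrt k"] unfolding k_def by simp
qed

lemma A_bounded:
  fixes A X Y :: "'a::complex_inner \<Rightarrow> 'a"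
  assumes P: "positive_op A" and BX: "bounded_clinear X" and BY: "bounded_clinear Y"
    and adj: "\<And>x y. innerA A (X x) y = innerA A x (Y y)"
  obtains c where "0 \<le> c" "\<And>x. normA A (X x) \<le> c * normA A x"
proof -
  obtain KX where KX: "\<And>x. norm (X x) \<le> KX * norm x" using bclinear_bound[OF BX] by blast
  obtain KY where KY: "\<And>x. norm (Y x) \<le> KY * norm x" using bclinear_bound[OF BY] by blast
  obtain a where a0: "0 \<le> a" and a: "\<And>w. normA A w \<le> a * norm w" using normA_le_norm[OF P] by blast
  define r where "r = max 1 (\<bar>KX\<bar> * \<bar>KY\<bar>)"
  have r1: "1 \<le> r" unfolding r_def by simp
  define R where "R = Y \<circ> X"
  have LX: "clinear X" using BX by (simp add: bounded_clinear_def)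
  have LY: "clinear Y" using BY by (simp add: bounded_clinear_def)
  have Rb: "norm (R z) \<le> r * norm z" for z
  proof -
    have "norm (R z) \<le> \<bar>KY\<bar> * norm (X z)" unfolding R_def using KY[of "X z"]
      by (simp add: order_trans[OF _ mult_right_mono[OF abs_ge_self]])
    also have "\<dots> \<le> \<bar>KY\<bar> * (\<bar>KX\<bar> * norm z)"
      using KX[of z] by (intro mult_left_mono) (auto intro: order_trans[OF _ mult_right_mono[OF abs_ge_self]])
    also have "\<dots> = (\<bar>KX\<bar> * \<bar>KY\<bar>) * norm z" by (simp add: mult_ac)
    also have "\<dots> \<le> r * norm z" unfolding r_def by (rule mult_right_mono) auto
    finally show ?thesis .
  qed
  have Rn: "norm ((R ^^ n) z) \<le> r^n * norm z" for n z
  proof (induction n)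
    case 0 then show ?case by simp
  next
    case (Suc n)
    have "norm ((R ^^ Suc n) z) \<le> r * norm ((R ^^ n) z)" using Rb by simp
    also have "\<dots> \<le> r * (r^n * norm z)" using Suc r1 by (intro mult_left_mono) auto
    finally show ?case by simp
  qed
  have Radj: "innerA A (R x) y = innerA A x (R y)" for x y
  proof -
    have "innerA A (R x) y = cnj (innerA A y (Y (X x)))" unfolding R_def comp_def by (rule iA_conj[OF P])
    also have "\<dots> = cnj (innerA A (X y) (X x))" using adj[of y "X x"] by simp
    also have "\<dots> = innerA A (X x) (X y)" using iA_conj[OF P, of "X x" "X y"] by simp
    also have "\<dots> = innerA A x (R y)" unfolding R_def using adj by simp
    finally show ?thesis .
  qed
  have Rpadj: "innerA A ((R ^^ n) x) y = innerA A x ((R ^^ n) y)" for n x y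
  proof (induction n arbitrary: x y)
    case 0 then show ?case by simp
  next
    case (Suc n)
    have "innerA A ((R ^^ Suc n) x) y = innerA A ((R ^^ n) x) (R y)" using Radj by simp
    also have "\<dots> = innerA A x ((R ^^ n) (R y))" by (rule Suc)
    also have "(R ^^ n) (R y) = (R ^^ Suc n) y" by (simp add: funpow_swap1)
    finally show ?case .
  qed
  define f where "f w = normA A w" for w
  have f0: "0 \<le> f w" for w unfolding f_def by (rule normA_nonneg[OF P])
  have sq: "(f ((R ^^ m) z))^2 \<le> f ((R ^^ (m + m)) z) * f z" for m z
  proof -
    have "(f ((R ^^ m) z))^2 = Re (innerA A ((R ^^ m) z) ((R ^^ m) z))"
      unfolding f_def by (rule normA_sq[OF P])
    also have "\<dots> = Re (innerA A ((R ^^ m) ((R ^^ m) z)) z)" using Rpadj[of m] by simp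
    also have "(R ^^ m) ((R ^^ m) z) = (R ^^ (m + m)) z" by (simp add: funpow_add)
    also have "Re (innerA A ((R ^^ (m + m)) z) z) \<le> cmod (innerA A ((R ^^ (m + m)) z) z)"
      by (rule complex_Re_le_cmod)
    also have "\<dots> \<le> f ((R ^^ (m + m)) z) * f z" unfolding f_def by (rule iA_CS[OF P])
    finally show ?thesis .
  qed
  have unit: "f (R z) \<le> r" if fz: "f z = 1" for z
  proof -
    have pw: "f (R z) ^ (2^k) \<le> f ((R ^^ (2^k)) z)" for k
    proof (induction k)
      case 0 then show ?case by simp
    next
      case (Suc k)
      have "f (R z) ^ (2 ^ Suc k) = (f (R z) ^ (2^k))^2" by (simp add: power_mult[symmetric] mult.commute)
      also have "\<dots> \<le> (f ((R ^^ (2^k)) z))^2" using Suc f0 by (intro power_mono) auto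
      also have "\<dots> \<le> f ((R ^^ (2^k + 2^k)) z) * f z" by (rule sq)
      also have "\<dots> = f ((R ^^ (2 ^ Suc k)) z)" using fz by (simp add: mult_2)
      finally show ?case .
    qed
    show ?thesis
    proof (rule ccontr)
      assume "\<not> ?thesis"
      then have q1: "1 < f (R z) / r" using r1 by simp
      define B where "B = a * norm z"
      have bnd: "(f (R z) / r) ^ (2^k) \<le> B" for k
      proof -
        have "f (R z) ^ (2^k) \<le> a * (r ^ (2^k) * norm z)"
          using pw[of k] a[of "(R ^^ (2^k)) z"] Rn[of "2^k" z] a0 unfolding f_def
          by (meson mult_left_mono order_trans)
        then show ?thesis unfolding B_def using r1 by (simp add: power_divide divide_le_eq mult_ac)
      qed
      obtain n where n: "B < (f (R z) / r) ^ n" using real_arch_pow[OF q1] by blast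
      have "(f (R z) / r) ^ n \<le> (f (R z) / r) ^ (2^n)"
        using q1 by (intro power_increasing) (auto intro: less_imp_le less_exp)
      then show False using n bnd[of n] by simp
    qed
  qed
  have main: "f (X x) \<le> sqrt r * f x" for x
  proof -
    have fx2: "(f (X x))^2 \<le> f x * f (R x)"
    proof -
      have "(f (X x))^2 = Re (innerA A (X x) (X x))" unfolding f_def by (rule normA_sq[OF P])
      also have "\<dots> = Re (innerA A x (R x))" unfolding R_def using adj by simp
      also have "\<dots> \<le> cmod (innerA A x (R x))" by (rule complex_Re_le_cmod)
      also have "\<dots> \<le> f x * f (R x)" unfolding f_def by (rule iA_CS[OF P])
      finally show ?thesis .
    qed
    show ?thesis
    proof (cases "f x = 0")
      case True
      then have "(f (X x))^2 \<le> 0" using fx2 by simp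
      then show ?thesis using True by simp
    next
      case False
      then have fxp: "0 < f x" using f0 by (simp add: less_le)
      define z where "z = scaleC (of_real (1 / f x)) x"
      have fz: "f z = 1" unfolding z_def f_def using normA_scaleC[OF P] fxp f_def by (simp add: norm_divide)
      have Xz: "X z = scaleC (of_real (1 / f x)) (X x)" unfolding z_def by (rule clinear_scaleC[OF LX])
      have fXz: "f (X z) = f (X x) / f x" unfolding Xz f_def using normA_scaleC[OF P] fxp f_def by (simp add: norm_divide)
      have "(f (X z))^2 \<le> f z * f (R z)"
      proof -
        have "(f (X z))^2 = Re (innerA A (X z) (X z))" unfolding f_def by (rule normA_sq[OF P])
        also have "\<dots> = Re (innerA A z (R z))" unfolding R_def using adj by simp
        also have "\<dots> \<le> cmod (innerA A z (R z))" by (rule complex_Re_le_cmod)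
        also have "\<dots> \<le> f z * f (R z)" unfolding f_def by (rule iA_CS[OF P])
        finally show ?thesis .
      qed
      also have "\<dots> \<le> r" using unit[OF fz] fz by simp
      finally have "(f (X z))^2 \<le> (sqrt r)^2" using r1 by simp
      then have "f (X z) \<le> sqrt r" by (rule power2_le_imp_le) (use r1 in simp)
      then show ?thesis unfolding fXz using fxp by (simp add: divide_le_eq)
    qed
  qed
  show ?thesis using that[of "sqrt r"] main r1 unfolding f_def by simp
qed

lemma buzano:
  fixes A :: "'a::complex_inner \<Rightarrow> 'a"
  assumes P: "positive_op A" and e1: "normA A e = 1"
  shows "2 * cmod (innerA A a e * innerA A e b) \<le> normA A a * normA A b + cmod (innerA A a b)"
proof -
  define c where "c = innerA A a e"
  define u where "u = scaleC (2 * c) e - a"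
  have ee: "innerA A e e = 1" using iA_self[OF P, of e] e1 by simp
  have ea: "innerA A e a = cnj c" unfolding c_def using iA_conj[OF P, of e a] .
  have ub: "innerA A u b = 2 * c * innerA A e b - innerA A a b"
    unfolding u_def by (simp add: iA_diff_left[OF P] iA_scaleC_left[OF P])
  have "innerA A u u = (2 * c) * cnj (2 * c) * innerA A e e - (2 * c) * innerA A e a
      - cnj (2 * c) * innerA A a e + innerA A a a"
    unfolding u_def by (simp add: iA_diff_left[OF P] iA_diff_right iA_scaleC_left[OF P] iA_scaleC_right algebra_simps)
  also have "\<dots> = innerA A a a" unfolding ee ea c_def[symmetric] by (simp add: algebra_simps)
  finally have "(normA A u)^2 = (normA A a)^2" using normA_sq[OF P, of u] normA_sq[OF P, of a] by simp
  then have nu: "normA A u = normA A a" using normA_nonneg[OF P] by (metis power2_eq_iff_nonneg)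
  have "2 * cmod (c * innerA A e b) = cmod (innerA A u b + innerA A a b)"
    unfolding ub by (simp add: norm_mult mult.assoc)
  also have "\<dots> \<le> cmod (innerA A u b) + cmod (innerA A a b)" by (rule norm_triangle_ineq)
  also have "cmod (innerA A u b) \<le> normA A a * normA A b" using iA_CS[OF P, of u b] nu by simp
  finally show ?thesis unfolding c_def by simp
qed

theorem corollary3p11:
  fixes A S :: "'a::complex_hilbert \<Rightarrow> 'a"
  assumes "positive_op A" and "A \<noteq> (\<lambda>x. 0)" and "BA A S"
  shows "omegaA A S ^ 4 \<le>
    1/4 * opnormA A (\<lambda>x. (sharpA A S \<circ> S \<circ> sharpA A S \<circ> S) x + (S \<circ> sharpA A S \<circ> S \<circ> sharpA A S) x)
    + 1/2 * omegaA A (sharpA A S \<circ> S \<circ> S \<circ> sharpA A S)"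
proof -
  note P = assms(1)
  have BS: "bounded_clinear S" using assms(3) unfolding BA_def by blast
  define T where "T = sharpA A S"
  obtain S' where BS': "bounded_clinear S'" and adj1: "\<And>x y. innerA A (S x) y = innerA A x (S' y)"
    and AT: "\<And>y. A (T y) = A (S' y)"
    using sharp_props[OF P assms(3)] unfolding T_def by blast
  define ip where "ip = innerA A"
  define n where "n = normA A"
  have n0: "0 \<le> n y" for y unfolding n_def by (rule normA_nonneg[OF P])
  have adjST: "ip (S x) y = ip x (T y)" for x y
  proof -
    have "ip x (T y) = cinner x (A (T y))" unfolding ip_def innerA_def by (rule pos_selfadj[OF P])
    also have "\<dots> = cinner x (A (S' y))" by (simp add: AT)
    also have "\<dots> = innerA A x (S' y)" unfolding innerA_def by (rule pos_selfadj[OF P, symmetric])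
    finally show ?thesis unfolding ip_def using adj1 by simp
  qed
  have adjTS: "ip (T x) y = ip x (S y)" for x y
    using iA_conj[OF P, of "T x" y] iA_conj[OF P, of x "S y"] adjST[of y x] unfolding ip_def by simp
  have adjS'S: "innerA A (S' x) y = innerA A x (S y)" for x y
    using iA_conj[OF P, of "S' x" y] iA_conj[OF P, of x "S y"] adj1[of y x] by simp
  have nT: "n (T y) = n (S' y)" for y
  proof -
    have "cinner (A (T y)) (T y) = cinner (A (S' y)) (T y)" by (simp add: AT)
    also have "\<dots> = cinner (S' y) (A (T y))" by (rule pos_selfadj[OF P])
    also have "\<dots> = cinner (S' y) (A (S' y))" by (simp add: AT)
    also have "\<dots> = cinner (A (S' y)) (S' y)" by (rule pos_selfadj[OF P, symmetric])
    finally show ?thesis unfolding n_def normA_def by simp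
  qed
  obtain cS where cS0: "0 \<le> cS" and cS: "\<And>x. n (S x) \<le> cS * n x"
    using A_bounded[OF P BS BS' adj1] unfolding n_def by blast
  obtain cT where cT0: "0 \<le> cT" and cT': "\<And>x. n (S' x) \<le> cT * n x"
    using A_bounded[OF P BS' BS adjS'S] unfolding n_def by blast
  have cT: "n (T x) \<le> cT * n x" for x using cT' nT by simp
  define K where "K = cS * cT"
  have K0: "0 \<le> K" unfolding K_def using cS0 cT0 by simp
  have nTS: "n (T (S y)) \<le> K * n y" for y
  proof -
    have "n (T (S y)) \<le> cT * n (S y)" by (rule cT)
    also have "\<dots> \<le> cT * (cS * n y)" using cS cT0 by (intro mult_left_mono) auto
    finally show ?thesis unfolding K_def by (simp add: mult_ac)
  qed
  have nST: "n (S (T y)) \<le> K * n y" for y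
  proof -
    have "n (S (T y)) \<le> cS * n (T y)" by (rule cS)
    also have "\<dots> \<le> cS * (cT * n y)" using cT cS0 by (intro mult_left_mono) auto
    finally show ?thesis unfolding K_def by (simp add: mult_ac)
  qed
  have nSS: "n (S (S y)) \<le> cS * cS * n y" for y
  proof -
    have "n (S (S y)) \<le> cS * n (S y)" by (rule cS)
    also have "\<dots> \<le> cS * (cS * n y)" using cS cS0 by (intro mult_left_mono) auto
    finally show ?thesis by (simp add: mult_ac)
  qed
  have nP: "n (T (S (T (S x))) + S (T (S (T x)))) \<le> 2 * K * K" if x1: "n x = 1" for x
  proof -
    have "n (T (S (T (S x))) + S (T (S (T x)))) \<le> n (T (S (T (S x)))) + n (S (T (S (T x))))"
      unfolding n_def by (rule normA_add[OF P])
    also have "n (T (S (T (S x)))) \<le> K * K"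
      using nTS[of "T (S x)"] nTS[of x] x1 K0 by (smt (verit) mult_left_mono mult_cancel_left1)
    also have "n (S (T (S (T x)))) \<le> K * K"
      using nST[of "S (T x)"] nST[of x] x1 K0 by (smt (verit) mult_left_mono mult_cancel_left1)
    finally show ?thesis by simp
  qed
  have nQ: "cmod (ip (T (S (S (T x)))) x) \<le> cT * cS * cS * cT" if x1: "n x = 1" for x
  proof -
    have "cmod (ip (T (S (S (T x)))) x) \<le> n (T (S (S (T x)))) * n x"
      unfolding ip_def n_def by (rule iA_CS[OF P])
    also have "\<dots> = n (T (S (S (T x))))" using x1 by simp
    also have "\<dots> \<le> cT * n (S (S (T x)))" by (rule cT)
    also have "\<dots> \<le> cT * (cS * cS * n (T x))" using nSS cT0 by (intro mult_left_mono) auto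
    also have "\<dots> \<le> cT * (cS * cS * (cT * n x))" using cT cT0 cS0
      by (intro mult_left_mono) auto
    finally show ?thesis using x1 by (simp add: mult_ac)
  qed
  have pt: "cmod (ip (S x) x) ^ 4 \<le> 1/4 * n (T (S (T (S x))) + S (T (S (T x))))
      + 1/2 * cmod (ip (T (S (S (T x)))) x)" if x1: "n x = 1" for x
  proof -
    define w where "w = cmod (ip (S x) x)"
    have w0: "0 \<le> w" unfolding w_def by simp
    have h1: "w \<le> n (S x)" using iA_CS[OF P, of "S x" x] x1 unfolding w_def ip_def n_def by simp
    have h2: "w \<le> n (T x)" using iA_CS[OF P, of x "T x"] x1 adjST[of x x] unfolding w_def ip_def n_def by simp
    have "w ^ 4 = w^2 * w^2" by (simp add: power_add[symmetric])
    also have "\<dots> \<le> (n (S x))^2 * (n (T x))^2"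
      using h1 h2 w0 by (intro mult_mono power_mono) auto
    also have "\<dots> = cmod (ip (T (S x)) x * ip x (S (T x)))"
    proof -
      have "ip (T (S x)) x = of_real ((n (S x))^2)"
        using adjTS[of "S x" x] iA_self[OF P, of "S x"] unfolding ip_def n_def by simp
      moreover have "ip x (S (T x)) = of_real ((n (T x))^2)"
        using adjTS[of x "T x"] iA_self[OF P, of "T x"] unfolding ip_def n_def by simp
      ultimately show ?thesis by (simp add: norm_mult norm_power)
    qed
    also have "\<dots> \<le> (n (T (S x)) * n (S (T x)) + cmod (ip (T (S x)) (S (T x)))) / 2"
      using buzano[OF P, of x "T (S x)" "S (T x)"] x1 unfolding ip_def n_def by simp
    also have "n (T (S x)) * n (S (T x)) \<le> ((n (T (S x)))^2 + (n (S (T x)))^2) / 2"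
    proof -
      have "2 * (n (T (S x)) * n (S (T x))) \<le> (n (T (S x)))^2 + (n (S (T x)))^2"
        using sum_squares_bound[of "n (T (S x))" "n (S (T x))"] by (simp only: mult.assoc)
      then show ?thesis by (simp add: field_simps)
    qed
    also have "(n (T (S x)))^2 + (n (S (T x)))^2 \<le> n (T (S (T (S x))) + S (T (S (T x))))"
    proof -
      have a: "ip (T (S x)) (T (S x)) = ip x (T (S (T (S x))))"
        using adjTS[of "S x" "T (S x)"] adjST[of x "S (T (S x))"] by simp
      have b: "ip (S (T x)) (S (T x)) = ip x (S (T (S (T x))))"
        using adjST[of "T x" "S (T x)"] adjTS[of x "T (S (T x))"] by simp
      have "(n (T (S x)))^2 + (n (S (T x)))^2 = Re (ip x (T (S (T (S x))) + S (T (S (T x)))))"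
        using normA_sq[OF P, of "T (S x)"] normA_sq[OF P, of "S (T x)"] a b
        unfolding ip_def n_def by (simp add: iA_add_right)
      also have "\<dots> \<le> cmod (ip x (T (S (T (S x))) + S (T (S (T x)))))" by (rule complex_Re_le_cmod)
      also have "\<dots> \<le> n x * n (T (S (T (S x))) + S (T (S (T x))))"
        unfolding ip_def n_def by (rule iA_CS[OF P])
      finally show ?thesis using x1 by simp
    qed
    also have "cmod (ip (T (S x)) (S (T x))) = cmod (ip (T (S (S (T x)))) x)"
    proof -
      have "ip (T (S x)) (S (T x)) = ip (S x) (S (S (T x)))" by (rule adjTS)
      also have "\<dots> = cnj (ip (S (S (T x))) (S x))" unfolding ip_def by (rule iA_conj[OF P])
      also have "ip (S (S (T x))) (S x) = ip (T (S (S (T x)))) x"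
        using adjTS[of "S (S (T x))" x] by simp
      finally show ?thesis by simp
    qed
    finally show ?thesis unfolding w_def by simp
  qed
  define U where "U = {x. n x = 1}"
  have Une: "U \<noteq> {}"
  proof -
    obtain x0 where x0: "A x0 \<noteq> 0" using assms(2) by auto
    have "\<exists>z. 0 < n z"
    proof (rule ccontr)
      assume "\<not> ?thesis"
      then have nz: "n z = 0" for z using n0 by (metis less_eq_real_def)
      have "cmod (innerA A x0 (A x0)) \<le> 0" using iA_CS[OF P, of x0 "A x0"] nz unfolding n_def by simp
      then have "cinner (A x0) (A x0) = 0" unfolding innerA_def by simp
      then show False using x0 by (simp add: cinner_self_eq_0)
    qed
    then obtain z where z: "0 < n z" by blast
    have "n (scaleC (of_real (1 / n z)) z) = 1" using normA_scaleC[OF P] z unfolding n_def by (simp add: norm_divide)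
    then show ?thesis unfolding U_def by blast
  qed
  define N where "N = {normA A ((T \<circ> S \<circ> T \<circ> S) x + (S \<circ> T \<circ> S \<circ> T) x) | x. normA A x = 1}"
  define WQ where "WQ = {cmod (innerA A ((T \<circ> S \<circ> S \<circ> T) x) x) | x. normA A x = 1}"
  define W where "W = {cmod (innerA A (S x) x) | x. normA A x = 1}"
  have bN: "bdd_above N" unfolding N_def
    by (rule bdd_aboveI[of _ "2 * K * K"]) (use nP in \<open>auto simp: n_def\<close>)
  have bQ: "bdd_above WQ" unfolding WQ_def
    by (rule bdd_aboveI[of _ "cT * cS * cS * cT"]) (use nQ in \<open>auto simp: n_def ip_def\<close>)
  define M where "M = 1/4 * Sup N + 1/2 * Sup WQ"
  have wM: "w ^ 4 \<le> M" if wW: "w \<in> W" for w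
  proof -
    obtain x where x1: "n x = 1" and w: "w = cmod (ip (S x) x)" using wW unfolding W_def n_def ip_def by blast
    have "n (T (S (T (S x))) + S (T (S (T x)))) \<le> Sup N"
      by (rule cSup_upper[OF _ bN]) (use x1 in \<open>auto simp: N_def n_def\<close>)
    moreover have "cmod (ip (T (S (S (T x)))) x) \<le> Sup WQ"
      by (rule cSup_upper[OF _ bQ]) (use x1 in \<open>auto simp: WQ_def n_def ip_def\<close>)
    ultimately show ?thesis using pt[OF x1] unfolding w M_def by linarith
  qed
  have Wne: "W \<noteq> {}" using Une unfolding W_def U_def n_def by blast
  have M0: "0 \<le> M"
  proof -
    obtain w where wW: "w \<in> W" using Wne by blast
    have "0 \<le> w" using wW unfolding W_def by auto
    then have "0 \<le> w ^ 4" by simp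
    then show ?thesis using wM[OF wW] by linarith
  qed
  have wr: "w \<le> root 4 M" if "w \<in> W" for w
  proof -
    have w0: "0 \<le> w" using that unfolding W_def by auto
    have "root 4 (w ^ 4) \<le> root 4 M" using wM[OF that] by simp
    then show ?thesis using real_root_power_cancel[of 4 w] w0 by simp
  qed
  have "Sup W \<le> root 4 M" by (rule cSup_least[OF Wne wr])
  moreover have "0 \<le> Sup W"
  proof -
    obtain w where wW: "w \<in> W" using Wne by blast
    have bW: "bdd_above W" by (rule bdd_aboveI[of W "root 4 M"]) (rule wr)
    have ws: "w \<le> Sup W" by (rule cSup_upper[OF wW bW])
    have "0 \<le> w" using wW unfolding W_def by auto
    then show ?thesis using ws by linarith
  qed
  ultimately have "Sup W ^ 4 \<le> (root 4 M) ^ 4" by (intro power_mono) auto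
  also have "\<dots> = M" using M0 by simp
  finally have fin: "Sup W ^ 4 \<le> 1/4 * Sup N + 1/2 * Sup WQ" unfolding M_def .
  show ?thesis unfolding omegaA_def opnormA_def T_def[symmetric]
    using fin unfolding W_def N_def WQ_def by simp
qed

end
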